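(* Let $M=(E,\mathcal{I})$ be a matroid, $\Delta$ a nonnegative integer, $w:E\to\{-\Delta,\dots,\Delta\}$ integer weights and $\mu\ge0$. Let $A,B\in\mathcal{I}$ be disjoint with $|A|=|B|=k$ and $|w(A)-w(B)|\le\mu$. Then there exist subsets $A'\subseteq A$ and $B'\subseteq B$ of equal cardinality such that (i) $(A\setminus A')\cup B'\in\mathcal{I}$, (ii) $|A'|=|B'|\ge (k-\mu)/(2\Delta+1)^2$, and (iii) $w(a)\ge w(b)$ for each $a\in A'$ and $b\in B'$.
   Context: $w(S)=\sum_{e\in S}w(e)$ for $S\subseteq E$. *)

theory Defs
  imports Complex_Main
begin

definition matroid :: "'a set \<Rightarrow> ('a set \<Rightarrow> bool) \<Rightarrow> bool" where
  "matroid E indep \<longleftrightarrow>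
     finite E \<and>
     (\<forall>X. indep X \<longrightarrow> X \<subseteq> E) \<and>
     indep {} \<and>
     (\<forall>X Y. indep Y \<and> X \<subseteq> Y \<longrightarrow> indep X) \<and>
     (\<forall>X Y. indep X \<and> indep Y \<and> card X < card Y \<longrightarrow> (\<exists>e\<in>Y - X. indep (insert e X)))"

end

theory Submission
  imports Defs
begin

lemma indep_finite:
  assumes "matroid E indep" "indep X" shows "finite X"
  using assms unfolding matroid_def by (meson finite_subset)

lemma indep_subset:
  assumes "matroid E indep" "indep Y" "X \<subseteq> Y" shows "indep X"
proof -
  have "\<forall>X Y. indep Y \<and> X \<subseteq> Y \<longrightarrow> indep X" using assms(1) unfolding matroid_def by blast
  thus ?thesis using assms by blast
qed

lemma aug:
  assumes M: "matroid E indep" and I: "indep I" and Y: "indep Y"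
  shows "card I + m \<le> card Y \<Longrightarrow> \<exists>Z. Z \<subseteq> Y \<and> Z \<inter> I = {} \<and> card Z = m \<and> indep (I \<union> Z)"
proof (induction m)
  case 0
  show ?case using I by (intro exI[of _ "{}"]) auto
next
  case (Suc m)
  then obtain Z where Z: "Z \<subseteq> Y" "Z \<inter> I = {}" "card Z = m" "indep (I \<union> Z)" by auto
  have fin: "finite (I \<union> Z)" using indep_finite[OF M Z(4)] .
  have "card (I \<union> Z) = card I + m"
    using fin Z by (simp add: card_Un_disjoint inf_commute)
  hence "card (I \<union> Z) < card Y" using Suc.prems by simp
  then obtain e where e: "e \<in> Y - (I \<union> Z)" "indep (insert e (I \<union> Z))"
  proof -
    have "\<forall>X Y. indep X \<and> indep Y \<and> card X < card Y \<longrightarrow> (\<exists>e\<in>Y - X. indep (insert e X))"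
      using M unfolding matroid_def by blast
    thus ?thesis using that Z(4) Y \<open>card (I \<union> Z) < card Y\<close> by blast
  qed
  show ?case
  proof (intro exI[of _ "insert e Z"] conjI)
    show "insert e Z \<subseteq> Y" using e Z by auto
    show "insert e Z \<inter> I = {}" using e Z by auto
    show "card (insert e Z) = Suc m" using e Z fin by auto
    show "indep (I \<union> insert e Z)" using e by simp
  qed
qed

lemma exch:
  assumes M: "matroid E indep" and iA: "indep A" and iB: "indep B"
    and cA: "card A = k" and cB: "card B = k"
  shows "\<exists>A' B'. A' \<subseteq> A \<and> B' \<subseteq> B \<and> card A' = card B' \<and> indep ((A - A') \<union> B') \<and>
     int (card A') \<ge> int (card {b\<in>B. w b \<le> t}) - int (card {a\<in>A. w a < t}) \<and>
     (\<forall>a\<in>A'. \<forall>b\<in>B'. (w::'a\<Rightarrow>int) a \<ge> w b)"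
proof -
  define X where "X = {a\<in>A. w a < t}"
  define Y where "Y = {b\<in>B. w b \<le> t}"
  define m where "m = card Y - card X"
  have finA: "finite A" using indep_finite[OF M iA] .
  have finB: "finite B" using indep_finite[OF M iB] .
  have iX: "indep X" using indep_subset[OF M iA] unfolding X_def by auto
  have iY: "indep Y" using indep_subset[OF M iB] unfolding Y_def by auto
  have cX: "card X \<le> k" using cA finA unfolding X_def by (metis card_mono Collect_subset)
  have cY: "card Y \<le> k" using cB finB unfolding Y_def by (metis card_mono Collect_subset)
  obtain Z where Z: "Z \<subseteq> Y" "Z \<inter> X = {}" "card Z = m" "indep (X \<union> Z)"
  proof (cases "m = 0")
    case True thus ?thesis using that[of "{}"] iX by auto
  next
    case False thus ?thesis using that aug[OF M iX iY, of m] unfolding m_def by auto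
  qed
  have finX: "finite X" using finA X_def by auto
  have finZ: "finite Z" using indep_finite[OF M Z(4)] by auto
  have cXZ: "card (X \<union> Z) = card X + m" using finX finZ Z by (simp add: card_Un_disjoint inf_commute)
  obtain Z2 where Z2: "Z2 \<subseteq> A" "Z2 \<inter> (X \<union> Z) = {}" "card Z2 = k - card X - m" "indep (X \<union> Z \<union> Z2)"
    using aug[OF M Z(4) iA, of "k - card X - m"] cXZ cA cX cY unfolding m_def by auto
  define A' where "A' = A - X - Z2"
  have XA: "X \<subseteq> A" unfolding X_def by auto
  have e1: "(A - A') \<union> Z = X \<union> Z \<union> Z2" using XA Z2(1) unfolding A'_def by auto
  have finZ2: "finite Z2" using Z2(1) finA finite_subset by auto
  have "card A' = card A - card (X \<union> Z2)"
  proof -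
    have "A' = A - (X \<union> Z2)" unfolding A'_def by auto
    moreover have "finite (X \<union> Z2)" using XA Z2(1) finA finite_subset by auto
    ultimately show ?thesis using XA Z2(1) by (simp add: card_Diff_subset)
  qed
  also have "card (X \<union> Z2) = card X + card Z2" proof -
    have "X \<inter> Z2 = {}" using Z2(2) by blast
    thus ?thesis using finX finZ2 by (simp add: card_Un_disjoint)
  qed
  finally have cA': "card A' = m" using Z2(3) cA cX cY unfolding m_def by simp
  have g1: "A' \<subseteq> A" unfolding A'_def by auto
  have g2: "Z \<subseteq> B" using Z(1) Y_def by auto
  have g3: "card A' = card Z" using cA' Z(3) by simp
  have g4: "indep (A - A' \<union> Z)" using e1 Z2(4) by simp
  have g5: "int (card {b\<in>B. w b \<le> t}) - int (card {a\<in>A. w a < t}) \<le> int (card A')"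
    using cA' unfolding m_def X_def Y_def by simp
  have g6: "\<forall>a\<in>A'. \<forall>b\<in>Z. w b \<le> w a" using Z(1) unfolding A'_def X_def Y_def by force
  show ?thesis using g1 g2 g3 g4 g5 g6 by blast
qed

lemma card_filter_int:
  assumes "finite B" shows "int (card {b\<in>B. P b}) = (\<Sum>b\<in>B. of_bool (P b))"
proof -
  have e: "{b\<in>B. P b} = B \<inter> {x. P x}" by blast
  show ?thesis unfolding e by (rule sum_of_bool_eq[OF assms assms, symmetric])
qed

lemma count_gen:
  fixes D :: int and w :: "'a \<Rightarrow> int" and g :: "int \<Rightarrow> int"
  assumes "finite B" "\<And>b. b \<in> B \<Longrightarrow> int (card {t\<in>{-D..D}. P (w b) t}) = g (w b)"
  shows "(\<Sum>t\<in>{-D..D}. int (card {b\<in>B. P (w b) t})) = (\<Sum>b\<in>B. g (w b))"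
proof -
  have s1: "(\<Sum>t\<in>{-D..D}. int (card {b\<in>B. P (w b) t})) = (\<Sum>t\<in>{-D..D}. \<Sum>b\<in>B. of_bool (P (w b) t))"
    by (rule sum.cong[OF refl], rule card_filter_int[OF assms(1)])
  have s2: "(\<Sum>t\<in>{-D..D}. \<Sum>b\<in>B. of_bool (P (w b) t)::int) = (\<Sum>b\<in>B. \<Sum>t\<in>{-D..D}. of_bool (P (w b) t))" by (rule sum.swap)
  have s3: "(\<Sum>b\<in>B. \<Sum>t\<in>{-D..D}. of_bool (P (w b) t)::int) = (\<Sum>b\<in>B. g (w b))"
  proof (rule sum.cong[OF refl])
    fix b assume b: "b \<in> B"
    have "(\<Sum>t\<in>{-D..D}. of_bool (P (w b) t)::int) = int (card {t\<in>{-D..D}. P (w b) t})"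
      by (rule card_filter_int[symmetric], rule finite_atLeastAtMost_int)
    also have "\<dots> = g (w b)" by (rule assms(2)[OF b])
    finally show "(\<Sum>t\<in>{-D..D}. of_bool (P (w b) t)::int) = g (w b)" .
  qed
  show ?thesis by (rule trans[OF s1 trans[OF s2 s3]])
qed

lemma l1: fixes x D :: int assumes "-D \<le> x" "x \<le> D" shows "{t\<in>{-D..D}. x \<le> t} = {x..D}"
  using assms by auto
lemma l2: fixes x D :: int assumes "-D \<le> x" "x \<le> D" shows "int (card {x..D}) = D - x + 1"
  using assms by simp
lemma l3: fixes x D :: int assumes "-D \<le> x" "x \<le> D" shows "{t\<in>{-D..D}. x < t} = {x+1..D}"
  using assms by auto
lemma l4: fixes x D :: int assumes "-D \<le> x" "x \<le> D" shows "int (card {x+1..D}) = D - x"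
  using assms by simp

lemma count_le:
  fixes D :: int and w :: "'a \<Rightarrow> int"
  assumes "finite B" "\<forall>b\<in>B. -D \<le> w b \<and> w b \<le> D"
  shows "(\<Sum>t\<in>{-D..D}. int (card {b\<in>B. w b \<le> t})) = (\<Sum>b\<in>B. D - w b + 1)"
proof (rule count_gen[where P="\<lambda>x t. x \<le> t" and g="\<lambda>x. D - x + 1", OF assms(1)])
  fix b assume b: "b \<in> B"
  have hb: "-D \<le> w b" "w b \<le> D" using assms(2) b by auto
  show "int (card {t\<in>{-D..D}. w b \<le> t}) = D - w b + 1"
    unfolding l1[OF hb] by (rule l2[OF hb])
qed

lemma count_lt:
  fixes D :: int and w :: "'a \<Rightarrow> int"
  assumes "finite B" "\<forall>b\<in>B. -D \<le> w b \<and> w b \<le> D"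
  shows "(\<Sum>t\<in>{-D..D}. int (card {b\<in>B. w b < t})) = (\<Sum>b\<in>B. D - w b)"
proof (rule count_gen[where P="\<lambda>x t. x < t" and g="\<lambda>x. D - x", OF assms(1)])
  fix b assume b: "b \<in> B"
  have hb: "-D \<le> w b" "w b \<le> D" using assms(2) b by auto
  show "int (card {t\<in>{-D..D}. w b < t}) = D - w b"
    unfolding l3[OF hb] by (rule l4[OF hb])
qed
lemma avg:
  fixes f :: "int \<Rightarrow> int"
  assumes "finite S" "S \<noteq> {}"
  shows "\<exists>t\<in>S. sum f S \<le> int (card S) * f t"
proof (rule ccontr)
  assume "\<not> ?thesis"
  hence h: "\<And>t. t \<in> S \<Longrightarrow> int (card S) * f t < sum f S" by force
  have "(\<Sum>t\<in>S. int (card S) * f t) < (\<Sum>t\<in>S. sum f S)"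
    by (rule sum_strict_mono[OF assms h])
  moreover have "(\<Sum>t\<in>S. int (card S) * f t) = int (card S) * sum f S" by (rule sum_distrib_left[symmetric])
  moreover have "(\<Sum>t\<in>S. sum f S) = int (card S) * sum f S" by simp
  ultimately show False by linarith
qed

theorem lemma8:
  fixes E :: "'a set" and indep :: "'a set \<Rightarrow> bool" and w :: "'a \<Rightarrow> int"
    and \<Delta> :: nat and \<mu> :: real and A B :: "'a set" and k :: nat
  assumes "matroid E indep"
    and "\<forall>e\<in>E. - int \<Delta> \<le> w e \<and> w e \<le> int \<Delta>"
    and "\<mu> \<ge> 0"
    and "indep A" and "indep B" and "A \<inter> B = {}"
    and "card A = k" and "card B = k"
    and "\<bar>real_of_int (sum w A - sum w B)\<bar> \<le> \<mu>"
  shows "\<exists>A' B'. A' \<subseteq> A \<and> B' \<subseteq> B \<and> card A' = card B' \<and>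
           indep ((A - A') \<union> B') \<and>
           real (card A') \<ge> (real k - \<mu>) / (2 * real \<Delta> + 1)^2 \<and>
           (\<forall>a\<in>A'. \<forall>b\<in>B'. w a \<ge> w b)"
proof -
  note M = assms(1)
  define D where "D = int \<Delta>"
  define f where "f t = int (card {b\<in>B. w b \<le> t}) - int (card {a\<in>A. w a < t})" for t
  have finA: "finite A" using indep_finite[OF M assms(4)] .
  have finB: "finite B" using indep_finite[OF M assms(5)] .
  have AE: "A \<subseteq> E" and BE: "B \<subseteq> E" using M assms(4,5) unfolding matroid_def by blast+
  have bA: "\<forall>b\<in>A. -D \<le> w b \<and> w b \<le> D" using AE assms(2) unfolding D_def by blast
  have bB: "\<forall>b\<in>B. -D \<le> w b \<and> w b \<le> D" using BE assms(2) unfolding D_def by blast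
  have "sum f {-D..D} = (\<Sum>t\<in>{-D..D}. int (card {b\<in>B. w b \<le> t})) - (\<Sum>t\<in>{-D..D}. int (card {a\<in>A. w a < t}))"
    unfolding f_def by (rule sum_subtractf)
  also have "\<dots> = (\<Sum>b\<in>B. D - w b + 1) - (\<Sum>a\<in>A. D - w a)"
    using count_le[OF finB bB] count_lt[OF finA bA] by simp
  also have "(\<Sum>b\<in>B. D - w b + 1) = int k * (D + 1) - sum w B"
    using assms(8) by (simp add: sum.distrib sum_subtractf algebra_simps)
  also have "(\<Sum>a\<in>A. D - w a) = int k * D - sum w A"
    using assms(7) by (simp add: sum_subtractf algebra_simps)
  finally have sf: "sum f {-D..D} = int k + sum w A - sum w B" by (simp add: algebra_simps)
  have ne: "{-D..D} \<noteq> {}" unfolding D_def by simp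
  obtain t where t: "sum f {-D..D} \<le> int (card {-D..D}) * f t"
    using avg[OF finite_atLeastAtMost_int ne] by blast
  have cT: "int (card {-D..D}) = 2 * D + 1" unfolding D_def by simp
  obtain A' B' where ex: "A' \<subseteq> A" "B' \<subseteq> B" "card A' = card B'" "indep ((A - A') \<union> B')"
     "int (card A') \<ge> int (card {b\<in>B. w b \<le> t}) - int (card {a\<in>A. w a < t})"
     "\<forall>a\<in>A'. \<forall>b\<in>B'. w a \<ge> w b"
    using exch[OF M assms(4,5,7,8), of w t] by blast
  have fc: "f t \<le> int (card A')" using ex(5) unfolding f_def .
  have i1: "int k + sum w A - sum w B \<le> (2 * D + 1) * int (card A')"
  proof -
    have "int k + sum w A - sum w B \<le> (2 * D + 1) * f t" using t sf cT by simp
    also have "\<dots> \<le> (2 * D + 1) * int (card A')" using fc unfolding D_def by (intro mult_left_mono) auto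
    finally show ?thesis .
  qed
  hence i2: "real k + real_of_int (sum w A - sum w B) \<le> (2 * real \<Delta> + 1) * real (card A')"
    unfolding D_def by (metis (mono_tags, opaque_lifting) add_diff_eq of_int_add of_int_le_iff of_int_mult of_int_of_nat_eq of_int_1 of_int_numeral)
  have i3: "real k - \<mu> \<le> (2 * real \<Delta> + 1) * real (card A')" using i2 assms(9) by linarith
  have i4: "(2 * real \<Delta> + 1) * real (card A') \<le> (2 * real \<Delta> + 1)^2 * real (card A')"
    by (rule mult_right_mono) (auto simp: power2_eq_square)
  have bound: "(real k - \<mu>) / (2 * real \<Delta> + 1)^2 \<le> real (card A')"
    using i3 i4 by (subst pos_divide_le_eq) (auto simp: mult.commute)
  show ?thesis using ex bound by blast
qed

end
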